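(* Let $K$ be a field equipped with a field endomorphism $\sigma$, and for a matrix $E$ over $K$ and $j\in\mathbb{N}$ let $E^{(j)}$ denote the matrix obtained by applying $\sigma^j$ entrywise. Let $E_1,\ldots,E_t\in K^{p\times q}$ with $t\ge 1$. For each integer $k\ge 1$ let $M_k$ be the block matrix with $k$ block rows and $k+t-1$ block columns (each block of size $p\times q$) whose block in block row $a$ and block column $b$ ($0\le a\le k-1$, $0\le b\le k+t-2$) is $E_{b-a+1}^{(a)}$ if $0\le b-a\le t-1$ and the zero $p\times q$ matrix otherwise; i.e. \[M_k=\begin{pmatrix} E_1&E_2&\cdots&E_t&&&\\ &E_1^{(1)}&E_2^{(1)}&\cdots&E_t^{(1)}&&\\ &&\ddots&\ddots&\ddots&\ddots&\\ &&&E_1^{(k-1)}&E_2^{(k-1)}&\cdots&E_t^{(k-1)} \end{pmatrix}.\] Then there exist $d'\in\mathbb{N}$ and $s'\in\mathbb{Z}$ such that $\operatorname{rank}_K(M_k)=d'k+s'$ for all sufficiently large $k$. Moreover, the least $k_0$ such that $\operatorname{rank}_K(M_k)=d'k+s'$ holds for all $k\ge k_0$ is at most $(t-1)(\min\{p,q\}+1)$. *)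

theory Defs
  imports "Jordan_Normal_Form.DL_Rank"
begin

definition twist_mat :: "('a \<Rightarrow> 'a) \<Rightarrow> nat \<Rightarrow> 'a mat \<Rightarrow> 'a mat" where
  "twist_mat \<sigma> j E = map_mat (\<sigma> ^^ j) E"

text \<open>The matrices E_1..E_t are given as E 1, ..., E t.\<close>
definition block_mat :: "('a::field \<Rightarrow> 'a) \<Rightarrow> (nat \<Rightarrow> 'a mat) \<Rightarrow> nat \<Rightarrow> nat \<Rightarrow> nat \<Rightarrow> nat \<Rightarrow> 'a mat" where
  "block_mat \<sigma> E t p q k =
     mat (k * p) ((k + t - 1) * q)
       (\<lambda>(i, j). let a = i div p; b = j div q in
          if a \<le> b \<and> b - a \<le> t - 1
          then twist_mat \<sigma> a (E (b - a + 1)) $$ (i mod p, j mod q)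
          else 0)"

end

theory Submission
  imports Defs "HOL-Library.Function_Algebras"
begin

interpretation fv: vector_space "\<lambda>(c::'a::field) (v::nat \<Rightarrow> 'a). (\<lambda>i. c * v i)"
  by unfold_locales (auto simp: fun_eq_iff algebra_simps)

lemma sum_app: "(\<Sum>i\<in>I. F i) x = (\<Sum>i\<in>I. F i x)"
  by (induction I rule: infinite_finite_induct) auto

lemma fin_basis:
  fixes S :: "(nat \<Rightarrow> 'a::field) set"
  assumes "finite S"
  obtains B where "B \<subseteq> S" "fv.independent B" "S \<subseteq> fv.span B" "fv.dim S = card B" "finite B"
proof -
  obtain B where B: "B \<subseteq> S" "fv.independent B" "S \<subseteq> fv.span B"
    using fv.maximal_independent_subset[of S] by blast
  have "fv.span B = fv.span S" using B unfolding fv.span_eq using B fv.span_superset by blast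
  then have "fv.dim S = card B" using fv.dim_eq_card B(2) by blast
  then show ?thesis using that B finite_subset[OF B(1) assms] by blast
qed

lemma dim_insert':
  fixes S :: "(nat \<Rightarrow> 'a::field) set"
  assumes "finite S"
  shows "fv.dim (insert a S) = (if a \<in> fv.span S then fv.dim S else Suc (fv.dim S))"
proof (cases "a \<in> fv.span S")
  case True
  then have "fv.span (insert a S) = fv.span S" by (rule fv.span_redundant)
  then have "fv.dim (insert a S) = fv.dim S" by (rule fv.span_eq_dim)
  then show ?thesis using True by simp
next
  case False
  obtain B where B: "B \<subseteq> S" "fv.independent B" "S \<subseteq> fv.span B" "fv.dim S = card B" "finite B"
    using fin_basis[OF assms] by blast
  have spB: "fv.span B = fv.span S" using B unfolding fv.span_eq using B fv.span_superset by blast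
  have "a \<notin> fv.span B" using False spB by simp
  then have ind: "fv.independent (insert a B)" using B(2) fv.independent_insertI by blast
  have "a \<notin> B" using \<open>a \<notin> fv.span B\<close> fv.span_base by blast
  have "fv.span (insert a B) = fv.span (insert a S)"
    by (simp only: fv.span_insert spB)
  then have "fv.dim (insert a S) = card (insert a B)" using fv.dim_eq_card ind by blast
  then show ?thesis using False B \<open>a \<notin> B\<close> by simp
qed


lemma dim_empty'[simp]: "fv.dim ({} :: (nat \<Rightarrow> 'a::field) set) = 0"
  using fv.dim_eq_card_independent[OF fv.independent_empty] by simp

lemma dim_mono':
  fixes W :: "(nat \<Rightarrow> 'a::field) set"
  assumes "finite W" "V \<subseteq> fv.span W"
  shows "fv.dim V \<le> fv.dim W"
proof -
  obtain B where B: "B \<subseteq> W" "fv.independent B" "W \<subseteq> fv.span B" "fv.dim W = card B" "finite B"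
    using fin_basis[OF assms(1)] by blast
  have "fv.span W \<subseteq> fv.span B" using B(3) fv.span_mono fv.span_span by metis
  then have "V \<subseteq> fv.span B" using assms(2) by blast
  then show ?thesis using fv.dim_le_card B by metis
qed

lemma dim_subset':
  fixes W :: "(nat \<Rightarrow> 'a::field) set"
  assumes "finite W" "V \<subseteq> W"
  shows "fv.dim V \<le> fv.dim W"
  using dim_mono'[OF assms(1)] assms(2) fv.span_superset by blast

lemma indep_le_dim:
  fixes V :: "(nat \<Rightarrow> 'a::field) set"
  assumes "finite V" "B' \<subseteq> fv.span V" "fv.independent B'"
  shows "card B' \<le> fv.dim V"
proof -
  obtain B where B: "B \<subseteq> V" "fv.independent B" "V \<subseteq> fv.span B" "fv.dim V = card B" "finite B"
    using fin_basis[OF assms(1)] by blast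
  have "fv.span V \<subseteq> fv.span B" using B(3) fv.span_mono fv.span_span by metis
  then have "B' \<subseteq> fv.span B" using assms(2) by blast
  then show ?thesis using fv.independent_span_bound[OF B(5) assms(3)] B(4) by simp
qed

lemma dim_Un_le:
  fixes S :: "(nat \<Rightarrow> 'a::field) set"
  assumes "finite S" "finite U"
  shows "fv.dim (S \<union> U) \<le> fv.dim S + card U"
  using assms(2)
proof (induction U rule: finite_induct)
  case empty then show ?case by simp
next
  case (insert u U)
  have "fv.dim (S \<union> insert u U) = fv.dim (insert u (S \<union> U))" by simp
  also have "\<dots> \<le> Suc (fv.dim (S \<union> U))" using dim_insert'[of "S \<union> U" u] assms insert by auto
  finally show ?case using insert by simp
qed

lemma dim_le_card':
  fixes S :: "(nat \<Rightarrow> 'a::field) set"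
  assumes "finite S" shows "fv.dim S \<le> card S"
  using dim_Un_le[of "{}" S] assms by simp

lemma SUB:
  fixes A :: "(nat \<Rightarrow> 'a::field) set"
  assumes "finite A" "finite B" "C \<subseteq> A"
  shows "fv.dim (A \<union> B) + fv.dim C \<le> fv.dim (C \<union> B) + fv.dim A"
  using assms(2)
proof (induction B rule: finite_induct)
  case empty then show ?case by simp
next
  case (insert b B)
  have fC: "finite C" using assms finite_subset by blast
  have e1: "fv.dim (A \<union> insert b B) = fv.dim (insert b (A \<union> B))" by simp
  have e2: "fv.dim (C \<union> insert b B) = fv.dim (insert b (C \<union> B))" by simp
  have sp: "fv.span (C \<union> B) \<subseteq> fv.span (A \<union> B)" using assms(3) by (intro fv.span_mono) blast
  have d1: "fv.dim (insert b (A \<union> B)) = (if b \<in> fv.span (A \<union> B) then fv.dim (A \<union> B) else Suc (fv.dim (A \<union> B)))"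
    using dim_insert'[of "A \<union> B" b] insert assms by simp
  have d2: "fv.dim (insert b (C \<union> B)) = (if b \<in> fv.span (C \<union> B) then fv.dim (C \<union> B) else Suc (fv.dim (C \<union> B)))"
    using dim_insert'[of "C \<union> B" b] insert fC by simp
  show ?case unfolding e1 e2 d1 d2 using insert.IH sp by auto
qed

lemma DPI:
  fixes X :: "(nat \<Rightarrow> 'a::field) set"
  assumes "finite X" "finite Y"
    and add: "\<And>x y. \<pi> (x + y) = \<pi> x + \<pi> y"
    and sc: "\<And>c x. \<pi> (\<lambda>i. c * x i) = (\<lambda>i. c * \<pi> x i)"
    and kill: "\<And>x. x \<in> X \<Longrightarrow> \<pi> x = 0"
  shows "fv.dim X + fv.dim (\<pi> ` Y) \<le> fv.dim (X \<union> Y)"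
  using assms(2)
proof (induction Y rule: finite_induct)
  case empty then show ?case by simp
next
  case (insert y Y)
  have p0: "\<pi> 0 = 0" using add[of 0 0] by simp
  have sub: "fv.subspace {z. \<pi> z \<in> fv.span (\<pi> ` Y)}"
    unfolding fv.subspace_def
  proof (intro conjI ballI allI)
    show "0 \<in> {z. \<pi> z \<in> fv.span (\<pi> ` Y)}" using fv.span_zero p0 by simp
  next
    fix x z assume "x \<in> {z. \<pi> z \<in> fv.span (\<pi> ` Y)}" "z \<in> {z. \<pi> z \<in> fv.span (\<pi> ` Y)}"
    then show "x + z \<in> {z. \<pi> z \<in> fv.span (\<pi> ` Y)}" using add fv.span_add by simp
  next
    fix c x assume "x \<in> {z. \<pi> z \<in> fv.span (\<pi> ` Y)}"
    then show "(\<lambda>i. c * x i) \<in> {z. \<pi> z \<in> fv.span (\<pi> ` Y)}" using sc fv.span_scale by simp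
  qed
  have "X \<union> Y \<subseteq> {z. \<pi> z \<in> fv.span (\<pi> ` Y)}"
    using kill fv.span_zero fv.span_base[of _ "\<pi> ` Y"] by auto
  then have key: "fv.span (X \<union> Y) \<subseteq> {z. \<pi> z \<in> fv.span (\<pi> ` Y)}"
    using fv.span_minimal sub by blast
  have e1: "fv.dim (X \<union> insert y Y) = fv.dim (insert y (X \<union> Y))" by simp
  have e2: "\<pi> ` insert y Y = insert (\<pi> y) (\<pi> ` Y)" by simp
  have d1: "fv.dim (insert y (X \<union> Y)) = (if y \<in> fv.span (X \<union> Y) then fv.dim (X \<union> Y) else Suc (fv.dim (X \<union> Y)))"
    using dim_insert'[of "X \<union> Y" y] insert assms by simp
  have d2: "fv.dim (insert (\<pi> y) (\<pi> ` Y)) = (if \<pi> y \<in> fv.span (\<pi> ` Y) then fv.dim (\<pi> ` Y) else Suc (fv.dim (\<pi> ` Y)))"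
    using dim_insert'[of "\<pi> ` Y" "\<pi> y"] insert by simp
  show ?case unfolding e1 e2 d1 d2 using insert.IH key by auto
qed


lemma sum_fun_zero_iff:
  "((\<Sum>i\<in>I. (\<lambda>x. c i * (F i x :: 'a::field))) = 0) \<longleftrightarrow> (\<forall>x. (\<Sum>i\<in>I. c i * F i x) = 0)"
  by (simp add: fun_eq_iff sum_app)

definition indfam :: "('i \<Rightarrow> nat \<Rightarrow> 'a::field) \<Rightarrow> 'i set \<Rightarrow> bool" where
  "indfam f I \<longleftrightarrow> (\<forall>c. (\<forall>x. (\<Sum>i\<in>I. c i * f i x) = 0) \<longrightarrow> (\<forall>i\<in>I. c i = 0))"

lemma ind_to_fam:
  fixes Z :: "(nat \<Rightarrow> 'a::field) set"
  assumes "finite Z" "fv.independent Z"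
  shows "indfam (\<lambda>v. v) Z"
  unfolding indfam_def
proof (intro allI impI ballI)
  fix c v assume h: "\<forall>x. (\<Sum>i\<in>Z. c i * i x) = 0" "v \<in> Z"
  have "(\<Sum>i\<in>Z. (\<lambda>x. c i * i x)) = 0" using h(1) sum_fun_zero_iff[of c "\<lambda>i. i" Z] by simp
  then show "c v = 0" using fv.independentD[OF assms(2) assms(1) subset_refl] h(2) by blast
qed

lemma fam_to_ind:
  fixes f :: "'i \<Rightarrow> nat \<Rightarrow> 'a::field"
  assumes "finite I" "indfam f I" "inj_on f I"
  shows "fv.independent (f ` I)"
proof
  assume "fv.dependent (f ` I)"
  then obtain u where u: "\<exists>v\<in>f ` I. u v \<noteq> 0" "(\<Sum>v\<in>f ` I. (\<lambda>x. u v * v x)) = 0"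
    using fv.dependent_finite[of "f ` I"] assms(1) by auto
  have "(\<Sum>i\<in>I. (\<lambda>x. u (f i) * f i x)) = 0"
    using u(2) sum.reindex[OF assms(3), of "\<lambda>v. (\<lambda>x. u v * v x)"] by simp
  then have "\<forall>x. (\<Sum>i\<in>I. u (f i) * f i x) = 0" using sum_fun_zero_iff[of "\<lambda>i. u (f i)" f I] by simp
  note Z = this
  from assms(2) have H: "\<And>c. (\<forall>x. (\<Sum>i\<in>I. c i * f i x) = 0) \<Longrightarrow> \<forall>i\<in>I. c i = 0" unfolding indfam_def by blast
  have "\<forall>i\<in>I. u (f i) = 0" by (rule H) (rule Z)
  then show False using u(1) by auto
qed

lemma SL_span:
  fixes T :: "(nat \<Rightarrow> 'a::field) \<Rightarrow> (nat \<Rightarrow> 'a)"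
  assumes Tadd: "\<And>x y. T (x + y) = T x + T y"
    and Tsc: "\<And>c x. T (\<lambda>i. c * x i) = (\<lambda>i. \<sigma> c * T x i)"
  shows "T ` fv.span Z \<subseteq> fv.span (T ` Z)"
proof -
  have p0: "T 0 = 0" using Tadd[of 0 0] by simp
  have sub: "fv.subspace {z. T z \<in> fv.span (T ` Z)}"
    unfolding fv.subspace_def
  proof (intro conjI ballI allI)
    show "0 \<in> {z. T z \<in> fv.span (T ` Z)}" using fv.span_zero p0 by simp
  next
    fix x z assume "x \<in> {z. T z \<in> fv.span (T ` Z)}" "z \<in> {z. T z \<in> fv.span (T ` Z)}"
    then show "x + z \<in> {z. T z \<in> fv.span (T ` Z)}" using Tadd fv.span_add by simp
  next
    fix c x assume "x \<in> {z. T z \<in> fv.span (T ` Z)}"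
    then show "(\<lambda>i. c * x i) \<in> {z. T z \<in> fv.span (T ` Z)}" using Tsc fv.span_scale by simp
  qed
  have "Z \<subseteq> {z. T z \<in> fv.span (T ` Z)}" using fv.span_base[of _ "T ` Z"] by auto
  then have "fv.span Z \<subseteq> {z. T z \<in> fv.span (T ` Z)}" using fv.span_minimal sub by blast
  then show ?thesis by blast
qed

lemma SL_dim_le:
  fixes T :: "(nat \<Rightarrow> 'a::field) \<Rightarrow> (nat \<Rightarrow> 'a)"
  assumes Tadd: "\<And>x y. T (x + y) = T x + T y"
    and Tsc: "\<And>c x. T (\<lambda>i. c * x i) = (\<lambda>i. \<sigma> c * T x i)"
    and "finite Z"
  shows "fv.dim (T ` Z) \<le> fv.dim Z"
proof -
  obtain B where B: "B \<subseteq> Z" "fv.independent B" "Z \<subseteq> fv.span B" "fv.dim Z = card B" "finite B"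
    using fin_basis[OF assms(3)] by blast
  have "T ` Z \<subseteq> T ` fv.span B" using B(3) by blast
  also have "\<dots> \<subseteq> fv.span (T ` B)" using SL_span[OF Tadd Tsc] by blast
  finally have "fv.dim (T ` Z) \<le> card (T ` B)" using fv.dim_le_card B(5) by blast
  also have "\<dots> \<le> card B" using B(5) card_image_le by blast
  finally show ?thesis using B(4) by simp
qed


lemma indfamD:
  assumes "indfam f I" "\<forall>x. (\<Sum>i\<in>I. c i * f i x) = 0" "i \<in> I"
  shows "c i = 0"
  using assms unfolding indfam_def by blast

lemma IND:
  fixes T :: "(nat \<Rightarrow> 'a::field) \<Rightarrow> (nat \<Rightarrow> 'a)" and \<sigma> :: "'a \<Rightarrow> 'a"
    and f :: "'i \<Rightarrow> nat \<Rightarrow> 'a"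
  assumes Tadd: "\<And>x y. T (x + y) = T x + T y"
    and Tsc: "\<And>c x. T (\<lambda>i. c * x i) = (\<lambda>i. \<sigma> c * T x i)"
    and Tcoord: "\<And>h j. T h (j + q) = \<sigma> (h j)"
    and s0: "\<sigma> 0 = 0" and sinj: "\<And>x. \<sigma> x = 0 \<Longrightarrow> x = 0"
  shows "finite I \<Longrightarrow> indfam f I \<Longrightarrow> indfam (\<lambda>i. T (f i)) I"
proof (induction "card I" arbitrary: I f)
  case 0
  then have "I = {}" by simp
  then show ?case unfolding indfam_def by simp
next
  case (Suc n)
  from Suc.hyps(2) obtain i0 where i0: "i0 \<in> I" by (metis card.empty ex_in_conv nat.distinct(1))
  define I' where "I' = I - {i0}"
  have fI': "finite I'" and cI': "n = card I'" using Suc i0 unfolding I'_def by auto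
  have IsI': "I = insert i0 I'" "i0 \<notin> I'" using i0 unfolding I'_def by auto
  have fi0: "f i0 \<noteq> 0"
  proof
    assume fz: "f i0 = 0"
    define c where "c i = (if i = i0 then (1::'a) else 0)" for i
    have "\<forall>x. (\<Sum>i\<in>I. c i * f i x) = 0"
      by (intro allI sum.neutral ballI) (simp add: c_def fz)
    then have "c i0 = 0" using indfamD[OF Suc.prems(2) _ i0] by blast
    then show False by (simp add: c_def)
  qed
  then obtain j where j: "f i0 j \<noteq> 0" by (auto simp: fun_eq_iff)
  define r where "r i = f i j / f i0 j" for i
  define g where "g i = (\<lambda>x. f i x - r i * f i0 x)" for i
  have indg: "indfam g I'"
    unfolding indfam_def
  proof (intro allI impI ballI)
    fix c i assume h: "\<forall>x. (\<Sum>i\<in>I'. c i * g i x) = 0" and iI: "i \<in> I'"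
    define c' where "c' i = (if i = i0 then - (\<Sum>k\<in>I'. c k * r k) else c i)" for i
    have "\<forall>x. (\<Sum>i\<in>I. c' i * f i x) = 0"
    proof
      fix x
      have e1: "(\<Sum>i\<in>I'. c' i * f i x) = (\<Sum>i\<in>I'. c i * f i x)"
        using IsI' by (intro sum.cong refl) (auto simp: c'_def)
      have "0 = (\<Sum>i\<in>I'. c i * g i x)" using h by simp
      also have "\<dots> = (\<Sum>i\<in>I'. c i * f i x - (c i * r i) * f i0 x)"
        by (intro sum.cong refl) (simp add: g_def right_diff_distrib mult.assoc)
      also have "\<dots> = (\<Sum>i\<in>I'. c i * f i x) - (\<Sum>i\<in>I'. c i * r i) * f i0 x"
        by (simp add: sum_subtractf sum_distrib_right)
      finally have e2: "(\<Sum>i\<in>I'. c i * f i x) = (\<Sum>i\<in>I'. c i * r i) * f i0 x" by simp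
      have "(\<Sum>i\<in>I. c' i * f i x) = c' i0 * f i0 x + (\<Sum>i\<in>I'. c' i * f i x)"
        using IsI' fI' by simp
      also have "\<dots> = 0" using e1 e2 by (simp add: c'_def)
      finally show "(\<Sum>i\<in>I. c' i * f i x) = 0" .
    qed
    then have "c' i = 0" using indfamD[OF Suc.prems(2)] iI IsI' by blast
    then show "c i = 0" using iI IsI' by (auto simp: c'_def split: if_splits)
  qed
  have IH: "indfam (\<lambda>i. T (g i)) I'" using Suc.hyps(1)[OF cI' fI' indg] .
  show ?case
    unfolding indfam_def
  proof (intro allI impI)
    fix c assume h: "\<forall>x. (\<Sum>i\<in>I. c i * T (f i) x) = 0"
    have decomp: "T (f i) x = T (g i) x + \<sigma> (r i) * T (f i0) x" for i x
    proof -
      have "f i = g i + (\<lambda>x. r i * f i0 x)" by (simp add: g_def fun_eq_iff)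
      then have "T (f i) = T (g i) + T (\<lambda>x. r i * f i0 x)" using Tadd by simp
      also have "T (\<lambda>x. r i * f i0 x) = (\<lambda>x. \<sigma> (r i) * T (f i0) x)" by (rule Tsc)
      finally have "T (f i) = T (g i) + (\<lambda>x. \<sigma> (r i) * T (f i0) x)" .
      then show ?thesis by simp
    qed
    have gz: "T (g i) (j + q) = 0" for i
      using j by (simp add: Tcoord g_def r_def s0)
    define \<alpha> where "\<alpha> = c i0 + (\<Sum>i\<in>I'. c i * \<sigma> (r i))"
    have sumform: "(\<Sum>i\<in>I. c i * T (f i) x) = \<alpha> * T (f i0) x + (\<Sum>i\<in>I'. c i * T (g i) x)" for x
    proof -
      have "(\<Sum>i\<in>I. c i * T (f i) x) = c i0 * T (f i0) x + (\<Sum>i\<in>I'. c i * T (f i) x)"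
        using IsI' fI' by simp
      also have "(\<Sum>i\<in>I'. c i * T (f i) x) = (\<Sum>i\<in>I'. c i * T (g i) x + (c i * \<sigma> (r i)) * T (f i0) x)"
      proof (intro sum.cong refl)
        fix i show "c i * T (f i) x = c i * T (g i) x + (c i * \<sigma> (r i)) * T (f i0) x"
          using decomp[of i x] by (simp add: distrib_left mult.assoc)
      qed
      also have "\<dots> = (\<Sum>i\<in>I'. c i * T (g i) x) + (\<Sum>i\<in>I'. c i * \<sigma> (r i)) * T (f i0) x"
        by (simp add: sum.distrib sum_distrib_right)
      finally show ?thesis by (simp add: \<alpha>_def algebra_simps)
    qed
    have "0 = \<alpha> * T (f i0) (j + q) + (\<Sum>i\<in>I'. c i * T (g i) (j + q))"
      using h sumform[of "j + q"] by simp
    also have "(\<Sum>i\<in>I'. c i * T (g i) (j + q)) = 0" using gz by simp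
    finally have "\<alpha> * \<sigma> (f i0 j) = 0" by (simp add: Tcoord)
    moreover have "\<sigma> (f i0 j) \<noteq> 0" using j sinj by blast
    ultimately have a0: "\<alpha> = 0" by simp
    then have "\<forall>x. (\<Sum>i\<in>I'. c i * T (g i) x) = 0" using h sumform by simp
    then have cI'0: "\<forall>i\<in>I'. c i = 0" using indfamD[OF IH] by blast
    then have "c i0 = 0" using a0 by (simp add: \<alpha>_def)
    then show "\<forall>i\<in>I. c i = 0" using cI'0 IsI' by auto
  qed
qed


lemma TW:
  fixes T :: "(nat \<Rightarrow> 'a::field) \<Rightarrow> (nat \<Rightarrow> 'a)" and \<sigma> :: "'a \<Rightarrow> 'a"
  assumes Tadd: "\<And>x y. T (x + y) = T x + T y"
    and Tsc: "\<And>c x. T (\<lambda>i. c * x i) = (\<lambda>i. \<sigma> c * T x i)"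
    and Tcoord: "\<And>h j. T h (j + q) = \<sigma> (h j)"
    and s0: "\<sigma> 0 = 0" and sinj: "\<And>x. \<sigma> x = 0 \<Longrightarrow> x = 0"
    and sadd: "\<And>x y. \<sigma> (x + y) = \<sigma> x + \<sigma> y"
    and "finite Z"
  shows "fv.dim (T ` Z) = fv.dim Z"
proof (rule antisym)
  show "fv.dim (T ` Z) \<le> fv.dim Z" using SL_dim_le[OF Tadd Tsc \<open>finite Z\<close>] .
  have sdiff: "\<sigma> (x - y) = \<sigma> x - \<sigma> y" for x y using sadd[of "x - y" y] by (simp add: algebra_simps)
  have injT: "inj T"
  proof (rule injI)
    fix h h' assume "T h = T h'"
    then have "\<sigma> (h j) = \<sigma> (h' j)" for j using Tcoord by metis
    then have "\<sigma> (h j - h' j) = 0" for j by (simp add: sdiff)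
    then have "h j - h' j = 0" for j using sinj by blast
    then show "h = h'" by (simp add: fun_eq_iff)
  qed
  obtain B where B: "B \<subseteq> Z" "fv.independent B" "Z \<subseteq> fv.span B" "fv.dim Z = card B" "finite B"
    using fin_basis[OF \<open>finite Z\<close>] by blast
  have "indfam (\<lambda>v. v) B" using ind_to_fam B by blast
  then have "indfam (\<lambda>v. T v) B" using IND[OF Tadd Tsc Tcoord s0 sinj B(5)] by blast
  then have indTB: "fv.independent (T ` B)" using fam_to_ind[OF B(5)] injT by (metis inj_on_subset subset_UNIV)
  have "T ` B \<subseteq> fv.span (T ` Z)" using B(1) fv.span_superset by blast
  then have "card (T ` B) \<le> fv.dim (T ` Z)" using indep_le_dim indTB \<open>finite Z\<close> by blast
  moreover have "card (T ` B) = card B" using injT by (metis card_image inj_on_subset subset_UNIV)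
  ultimately show "fv.dim Z \<le> fv.dim (T ` Z)" using B(4) by simp
qed

definition colf :: "'a::field mat \<Rightarrow> nat \<Rightarrow> nat \<Rightarrow> 'a" where
  "colf A j = (\<lambda>i. if i < dim_row A then A $$ (i, j) else 0)"
definition rowf :: "'a::field mat \<Rightarrow> nat \<Rightarrow> nat \<Rightarrow> 'a" where
  "rowf A i = (\<lambda>j. if j < dim_col A then A $$ (i, j) else 0)"

definition vf :: "nat \<Rightarrow> 'a vec \<Rightarrow> nat \<Rightarrow> 'a::zero" where
  "vf n v = (\<lambda>i. if i < n then v $ i else 0)"

lemma (in vec_space) vf_lincomb:
  assumes "finite T" "T \<subseteq> carrier_vec n"
  shows "vf n (lincomb a T) = (\<Sum>v\<in>T. (\<lambda>i. a v * vf n v i))"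
proof
  fix i show "vf n (lincomb a T) i = (\<Sum>v\<in>T. (\<lambda>i. a v * vf n v i)) i"
    unfolding sum_app using lincomb_index[OF _ assms(2)] by (simp add: vf_def)
qed

lemma (in vec_space) vf_inj: "inj_on (vf n) (carrier_vec n)"
proof (rule inj_onI)
  fix v w assume "v \<in> carrier_vec n" "w \<in> carrier_vec n" "vf n v = vf n w"
  then show "v = w" by (intro eq_vecI) (auto simp: vf_def fun_eq_iff, metis)
qed

lemma (in vec_space) Tr:
  assumes "finite T" "T \<subseteq> carrier_vec n"
  shows "lin_dep T \<longleftrightarrow> fv.dependent (vf n ` T)"
proof
  assume "lin_dep T"
  then obtain a v where a: "lincomb a T = 0\<^sub>v n" "v \<in> T" "a v \<noteq> 0"
    using finite_lin_dep[OF assms(1)] assms(2) by auto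
  have inj: "inj_on (vf n) T" using vf_inj assms(2) inj_on_subset by blast
  define u where "u x = a (inv_into T (vf n) x)" for x
  have "(\<Sum>x\<in>vf n ` T. (\<lambda>i. u x * x i)) = (\<Sum>v\<in>T. (\<lambda>i. a v * vf n v i))"
    using sum.reindex[OF inj, of "\<lambda>x. (\<lambda>i. u x * x i)"] inj by (simp add: u_def)
  also have "\<dots> = vf n (lincomb a T)" using vf_lincomb assms by simp
  also have "\<dots> = 0" using a(1) by (simp add: vf_def fun_eq_iff)
  finally have "(\<Sum>x\<in>vf n ` T. (\<lambda>i. u x * x i)) = 0" .
  moreover have "u (vf n v) \<noteq> 0" using a inj by (simp add: u_def)
  ultimately show "fv.dependent (vf n ` T)" using fv.dependent_finite[of "vf n ` T"] assms a(2) by blast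
next
  assume "fv.dependent (vf n ` T)"
  then obtain u where u: "\<exists>v\<in>vf n ` T. u v \<noteq> 0" "(\<Sum>v\<in>vf n ` T. (\<lambda>i. u v * v i)) = 0"
    using fv.dependent_finite[of "vf n ` T"] assms(1) by auto
  have inj: "inj_on (vf n) T" using vf_inj assms(2) inj_on_subset by blast
  define a where "a v = u (vf n v)" for v
  have "(\<Sum>v\<in>T. (\<lambda>i. a v * vf n v i)) = 0"
    using u(2) sum.reindex[OF inj, of "\<lambda>x. (\<lambda>i. u x * x i)"] by (simp add: a_def)
  then have "vf n (lincomb a T) = 0" using vf_lincomb assms by simp
  then have lc: "lincomb a T = 0\<^sub>v n"
    using lincomb_dim[OF assms] by (intro eq_vecI) (auto simp: vf_def fun_eq_iff, metis)
  obtain v where v: "v \<in> T" "a v \<noteq> 0" using u(1) by (auto simp: a_def)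
  show "lin_dep T" using lin_dep_crit[OF assms(1) subset_refl _ v lc] by simp
qed



lemma (in vec_space) rank_bridge:
  assumes A: "A \<in> carrier_mat n nc"
  shows "rank A = fv.dim (colf A ` {..<nc})"
proof -
  obtain S where max: "maximal S (\<lambda>T. T \<subseteq> set (cols A) \<and> lin_indpt T)"
    using maximal_exists[of "(\<lambda>T. T \<subseteq> set (cols A) \<and> lin_indpt T)" "card (set (cols A))" "{}"]
    by (meson List.finite_set card_mono empty_iff empty_subsetI finite_lin_indpt2 rev_finite_subset)
  have rk: "rank A = card S" using rank_card_indpt[OF A max] .
  have SC: "S \<subseteq> set (cols A)" "lin_indpt S" using max unfolding maximal_def by auto
  have colsC: "set (cols A) \<subseteq> carrier_vec n" using A cols_dim by blast
  have fS: "finite S" using SC(1) finite_subset by blast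
  have SCv: "S \<subseteq> carrier_vec n" using SC(1) colsC by blast
  have injS: "inj_on (vf n) S" using vf_inj SCv inj_on_subset by blast
  have indS: "fv.independent (vf n ` S)" using Tr[OF fS SCv] SC(2) by blast
  have img: "colf A ` {..<nc} = vf n ` set (cols A)"
  proof -
    have "colf A j = vf n (col A j)" if "j < nc" for j
      using A that by (auto simp: colf_def vf_def fun_eq_iff)
    moreover have "set (cols A) = col A ` {..<nc}" using A by (auto simp: cols_def)
    ultimately show ?thesis by (auto simp: image_image)
  qed
  have sp: "vf n ` set (cols A) \<subseteq> fv.span (vf n ` S)"
  proof
    fix x assume "x \<in> vf n ` set (cols A)"
    then obtain c where c: "c \<in> set (cols A)" "x = vf n c" by blast
    show "x \<in> fv.span (vf n ` S)"
    proof (cases "c \<in> S")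
      case True then show ?thesis using c fv.span_base by blast
    next
      case False
      have "\<not> (insert c S \<subseteq> set (cols A) \<and> lin_indpt (insert c S))"
        using max False unfolding maximal_def by blast
      then have "lin_dep (insert c S)" using SC c by blast
      then have dep: "fv.dependent (insert (vf n c) (vf n ` S))"
        using Tr[of "insert c S"] fS SCv colsC c by auto
      have "vf n c \<notin> vf n ` S" using False vf_inj SCv colsC c by (auto simp: inj_on_def)
      then have "fv.independent (insert (vf n c) (vf n ` S)) = (fv.independent (vf n ` S) \<and> vf n c \<notin> fv.span (vf n ` S))"
        using fv.independent_insert[of "vf n c" "vf n ` S"] \<open>vf n c \<notin> vf n ` S\<close> by argo
      then show ?thesis using dep indS c by blast
    qed
  qed
  have "fv.span (vf n ` S) = fv.span (vf n ` set (cols A))"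
  proof -
    have "vf n ` S \<subseteq> vf n ` set (cols A)" using SC(1) by blast
    then have "vf n ` S \<subseteq> fv.span (vf n ` set (cols A))" using fv.span_superset by blast
    then show ?thesis unfolding fv.span_eq using sp by blast
  qed
  then have "fv.dim (vf n ` set (cols A)) = card (vf n ` S)" by (rule fv.dim_eq_card[OF _ indS])
  then show ?thesis using rk img card_image[OF injS] by simp
qed


lemma RC:
  fixes A :: "'a::field mat"
  shows "fv.dim (rowf A ` {..<dim_row A}) \<le> fv.dim (colf A ` {..<dim_col A})"
proof -
  define nr where "nr = dim_row A"
  define nc where "nc = dim_col A"
  define Cs where "Cs = colf A ` {..<nc}"
  have fC: "finite Cs" unfolding Cs_def by simp
  obtain B where B: "B \<subseteq> Cs" "fv.independent B" "Cs \<subseteq> fv.span B" "fv.dim Cs = card B" "finite B"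
    using fin_basis[OF fC] by blast
  have "\<forall>j. \<exists>u. j < nc \<longrightarrow> colf A j = (\<Sum>v\<in>B. (\<lambda>x. u v * v x))"
  proof (intro allI)
    fix j
    show "\<exists>u. j < nc \<longrightarrow> colf A j = (\<Sum>v\<in>B. (\<lambda>x. u v * v x))"
    proof (cases "j < nc")
      case True
      then have "colf A j \<in> fv.span B" using B(3) unfolding Cs_def by blast
      then show ?thesis using fv.span_finite[OF B(5)] by (auto simp: image_iff)
    qed auto
  qed
  then obtain U where U: "\<And>j. j < nc \<Longrightarrow> colf A j = (\<Sum>v\<in>B. (\<lambda>x. U j v * v x))"
    by metis
  define w where "w v = (\<lambda>j. if j < nc then U j v else 0)" for v
  have rw: "rowf A i = (\<Sum>v\<in>B. (\<lambda>j. v i * w v j))" if i: "i < nr" for i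
  proof
    fix j
    show "rowf A i j = (\<Sum>v\<in>B. (\<lambda>j. v i * w v j)) j"
    proof (cases "j < nc")
      case True
      have "rowf A i j = colf A j i" using i True by (simp add: rowf_def colf_def nr_def nc_def)
      also have "\<dots> = (\<Sum>v\<in>B. U j v * v i)" using U[OF True] by (simp add: sum_app)
      also have "\<dots> = (\<Sum>v\<in>B. (\<lambda>j. v i * w v j)) j" using True by (simp add: sum_app w_def mult.commute)
      finally show ?thesis .
    next
      case False
      then show ?thesis by (simp add: rowf_def nc_def sum_app w_def)
    qed
  qed
  have "rowf A ` {..<nr} \<subseteq> fv.span (w ` B)"
  proof
    fix x assume "x \<in> rowf A ` {..<nr}"
    then obtain i where i: "i < nr" "x = rowf A i" by blast
    have "(\<Sum>v\<in>B. (\<lambda>j. v i * w v j)) \<in> fv.span (w ` B)"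
      by (intro fv.span_sum fv.span_scale fv.span_base) auto
    then show "x \<in> fv.span (w ` B)" using rw[OF i(1)] i(2) by simp
  qed
  then have "fv.dim (rowf A ` {..<nr}) \<le> card (w ` B)" using fv.dim_le_card B(5) by blast
  also have "\<dots> \<le> card B" using card_image_le B(5) by blast
  finally show ?thesis using B(4) unfolding Cs_def nr_def nc_def by simp
qed

lemma row_col_dim:
  fixes A :: "'a::field mat"
  shows "fv.dim (rowf A ` {..<dim_row A}) = fv.dim (colf A ` {..<dim_col A})"
proof (rule antisym)
  show "fv.dim (rowf A ` {..<dim_row A}) \<le> fv.dim (colf A ` {..<dim_col A})" by (rule RC)
  have "rowf (transpose_mat A) ` {..<dim_row (transpose_mat A)} = colf A ` {..<dim_col A}"
    by (intro image_cong) (auto simp: rowf_def colf_def fun_eq_iff)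
  moreover have "colf (transpose_mat A) ` {..<dim_col (transpose_mat A)} = rowf A ` {..<dim_row A}"
    by (intro image_cong) (auto simp: rowf_def colf_def fun_eq_iff)
  ultimately show "fv.dim (colf A ` {..<dim_col A}) \<le> fv.dim (rowf A ` {..<dim_row A})"
    using RC[of "transpose_mat A"] by simp
qed

lemma rank_rows:
  fixes A :: "'a::field mat"
  assumes "A \<in> carrier_mat n nc"
  shows "vec_space.rank n A = fv.dim (rowf A ` {..<n})"
  using vec_space.rank_bridge[OF assms] row_col_dim[of A] assms by simp


definition shiftT :: "('a::field \<Rightarrow> 'a) \<Rightarrow> nat \<Rightarrow> (nat \<Rightarrow> 'a) \<Rightarrow> nat \<Rightarrow> 'a" where
  "shiftT \<sigma> q h = (\<lambda>j. if q \<le> j then \<sigma> (h (j - q)) else 0)"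

definition grow :: "('a::field \<Rightarrow> 'a) \<Rightarrow> (nat \<Rightarrow> 'a mat) \<Rightarrow> nat \<Rightarrow> nat \<Rightarrow> nat \<Rightarrow> nat \<Rightarrow> nat \<Rightarrow> 'a" where
  "grow \<sigma> E t q a i = (\<lambda>j. if a * q \<le> j \<and> j < (a + t) * q then (\<sigma> ^^ a) (E (j div q - a + 1) $$ (i, j mod q)) else 0)"

definition Gr :: "('a::field \<Rightarrow> 'a) \<Rightarrow> (nat \<Rightarrow> 'a mat) \<Rightarrow> nat \<Rightarrow> nat \<Rightarrow> nat \<Rightarrow> nat \<Rightarrow> nat \<Rightarrow> (nat \<Rightarrow> 'a) set" where
  "Gr \<sigma> E t p q s n = (\<lambda>(a, i). grow \<sigma> E t q a i) ` ({s..<s + n} \<times> {..<p})"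

context
  fixes \<sigma> :: "'a::field \<Rightarrow> 'a" and E :: "nat \<Rightarrow> 'a mat" and t p q :: nat
  assumes hom_one: "\<sigma> 1 = 1"
    and hom_add: "\<And>x y. \<sigma> (x + y) = \<sigma> x + \<sigma> y"
    and hom_mult: "\<And>x y. \<sigma> (x * y) = \<sigma> x * \<sigma> y"
    and t_pos: "t \<ge> 1"
    and E_dim: "\<And>i. i \<in> {1..t} \<Longrightarrow> E i \<in> carrier_mat p q"
begin

lemma s0: "\<sigma> 0 = 0"
proof -
  have "\<sigma> 0 + \<sigma> 0 = \<sigma> 0 + 0" using hom_add[of 0 0] by simp
  then show ?thesis by (rule add_left_imp_eq)
qed

lemma sinj: "\<sigma> x = 0 \<Longrightarrow> x = 0"
proof (rule ccontr)
  assume "\<sigma> x = 0" "x \<noteq> 0"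
  have "1 = \<sigma> x * \<sigma> (inverse x)" using hom_mult[of x "inverse x"] \<open>x \<noteq> 0\<close> hom_one by simp
  then show False using \<open>\<sigma> x = 0\<close> by simp
qed

lemma T_add: "shiftT \<sigma> q (x + y) = shiftT \<sigma> q x + shiftT \<sigma> q y"
  by (simp add: shiftT_def fun_eq_iff hom_add)

lemma T_sc: "shiftT \<sigma> q (\<lambda>i. c * x i) = (\<lambda>i. \<sigma> c * shiftT \<sigma> q x i)"
  by (simp add: shiftT_def fun_eq_iff hom_mult s0)

lemma T_coord: "shiftT \<sigma> q h (j + q) = \<sigma> (h j)"
  by (simp add: shiftT_def)

lemma dim_shift: "finite Z \<Longrightarrow> fv.dim (shiftT \<sigma> q ` Z) = fv.dim Z"
  using TW[OF T_add T_sc T_coord s0 sinj hom_add] by blast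

lemma shift_grow: "shiftT \<sigma> q (grow \<sigma> E t q a i) = grow \<sigma> E t q (Suc a) i"
proof
  fix j
  show "shiftT \<sigma> q (grow \<sigma> E t q a i) j = grow \<sigma> E t q (Suc a) i j"
  proof (cases "q \<le> j \<and> 0 < q")
    case True
    then have dv: "j div q = Suc ((j - q) div q)" and md: "j mod q = (j - q) mod q"
      using le_div_geq le_mod_geq by auto
    have c: "(a * q \<le> j - q \<and> j - q < (a + t) * q) \<longleftrightarrow> (Suc a * q \<le> j \<and> j < (Suc a + t) * q)"
      using True by (auto simp: algebra_simps)
    show ?thesis using True c by (simp add: shiftT_def grow_def dv md s0)
  next
    case False
    then show ?thesis by (auto simp: shiftT_def grow_def s0)
  qed
qed

lemma shift_Gr: "shiftT \<sigma> q ` Gr \<sigma> E t p q s n = Gr \<sigma> E t p q (Suc s) n"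
proof -
  have "shiftT \<sigma> q ` Gr \<sigma> E t p q s n = (\<lambda>(a, i). grow \<sigma> E t q (Suc a) i) ` ({s..<s + n} \<times> {..<p})"
    unfolding Gr_def image_image by (intro image_cong) (auto simp: shift_grow)
  also have "\<dots> = (\<lambda>(a, i). grow \<sigma> E t q a i) ` ((\<lambda>(a,i). (Suc a, i)) ` ({s..<s + n} \<times> {..<p}))"
    by (simp add: image_image case_prod_beta)
  also have "(\<lambda>(a,i). (Suc a, i)) ` ({s..<s + n} \<times> {..<p}) = {Suc s..<Suc s + n} \<times> {..<p}"
  proof -
    have "(\<lambda>(a,i). (Suc a, i)) ` ({s..<s + n} \<times> {..<p}) = (Suc ` {s..<s + n}) \<times> {..<p}"
      using image_paired_Times[of Suc "\<lambda>i. i" "{s..<s + n}" "{..<p}"] by simp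
    also have "Suc ` {s..<s + n} = {Suc s..<Suc s + n}" by (simp add: image_Suc_atLeastLessThan)
    finally show ?thesis .
  qed
  finally show ?thesis unfolding Gr_def .
qed

lemma fin_Gr: "finite (Gr \<sigma> E t p q s n)" unfolding Gr_def by simp

lemma card_Gr: "card (Gr \<sigma> E t p q s n) \<le> n * p"
proof -
  have "card (Gr \<sigma> E t p q s n) \<le> card ({s..<s + n} \<times> {..<p})" unfolding Gr_def by (rule card_image_le) simp
  then show ?thesis by (simp add: card_cartesian_product)
qed

lemma dim_Gr: "fv.dim (Gr \<sigma> E t p q s n) = fv.dim (Gr \<sigma> E t p q 0 n)"
proof (induction s)
  case (Suc s)
  then show ?case using dim_shift[OF fin_Gr, of s n] shift_Gr[of s n] by simp
qed simp

lemma Gr_split: "Gr \<sigma> E t p q s (m + n) = Gr \<sigma> E t p q s m \<union> Gr \<sigma> E t p q (s + m) n"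
proof -
  have "{s..<s + (m + n)} = {s..<s + m} \<union> {s + m..<s + m + n}" by auto
  then show ?thesis unfolding Gr_def by (simp add: Sigma_Un_distrib1 image_Un add.assoc)
qed


lemma row_block:
  assumes r: "r < k * p"
  shows "rowf (block_mat \<sigma> E t p q k) r = grow \<sigma> E t q (r div p) (r mod p)"
proof
  fix j
  have p0: "0 < p" using r by (cases p) auto
  define a where "a = r div p"
  define i where "i = r mod p"
  have ak: "a < k" using r p0 unfolding a_def by (simp add: div_less_iff_less_mult mult.commute)
  have ip: "i < p" using p0 unfolding i_def by simp
  show "rowf (block_mat \<sigma> E t p q k) r j = grow \<sigma> E t q (r div p) (r mod p) j"
  proof (cases "0 < q")
    case False
    then show ?thesis by (simp add: rowf_def grow_def block_mat_def)
  next
    case q0: True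
    have c1: "a \<le> j div q \<longleftrightarrow> a * q \<le> j" using q0 by (simp add: less_eq_div_iff_mult_less_eq)
    have c2: "j div q < a + t \<longleftrightarrow> j < (a + t) * q" using q0 by (simp add: div_less_iff_less_mult)
    have cond: "(a \<le> j div q \<and> j div q - a \<le> t - 1) \<longleftrightarrow> (a * q \<le> j \<and> j < (a + t) * q)"
      using c1 c2 t_pos by auto
    show ?thesis
    proof (cases "a * q \<le> j \<and> j < (a + t) * q")
      case True
      have jlt: "j < (k + t - 1) * q"
      proof -
        have "(a + t) * q \<le> (k + t - 1) * q" using ak t_pos by (intro mult_right_mono) auto
        moreover have "j < (a + t) * q" using True by simp
        ultimately show ?thesis by (rule order.strict_trans2[rotated])
      qed
      have bi: "j div q - a + 1 \<in> {1..t}" using True c1 c2 by auto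
      have Ed: "E (j div q - a + 1) \<in> carrier_mat p q" using E_dim[OF bi] .
      have jm: "j mod q < q" using q0 by simp
      have "rowf (block_mat \<sigma> E t p q k) r j = twist_mat \<sigma> a (E (j div q - a + 1)) $$ (i, j mod q)"
        using jlt r True cond by (simp add: rowf_def block_mat_def a_def i_def Let_def)
      also have "\<dots> = (\<sigma> ^^ a) (E (j div q - a + 1) $$ (i, j mod q))"
        using Ed ip jm by (simp add: twist_mat_def)
      finally show ?thesis using True by (simp add: grow_def a_def i_def)
    next
      case False
      then have nc: "\<not> (r div p \<le> j div q \<and> j div q - r div p \<le> t - 1)" using cond unfolding a_def by simp
      have "rowf (block_mat \<sigma> E t p q k) r j = 0"
        using r nc by (auto simp: rowf_def block_mat_def Let_def)
      moreover have "grow \<sigma> E t q (r div p) (r mod p) j = 0" using False by (auto simp: grow_def a_def)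
      ultimately show ?thesis by simp
    qed
  qed
qed

lemma rows_block: "rowf (block_mat \<sigma> E t p q k) ` {..<k * p} = Gr \<sigma> E t p q 0 k"
proof -
  have "rowf (block_mat \<sigma> E t p q k) ` {..<k * p} = (\<lambda>(a, i). grow \<sigma> E t q a i) ` ((\<lambda>r. (r div p, r mod p)) ` {..<k * p})"
    unfolding image_image by (intro image_cong refl) (simp add: row_block)
  also have "(\<lambda>r. (r div p, r mod p)) ` {..<k * p} = {0..<0 + k} \<times> {..<p}"
  proof (cases "p = 0")
    case True then show ?thesis by simp
  next
    case False
    show ?thesis
    proof
      show "(\<lambda>r. (r div p, r mod p)) ` {..<k * p} \<subseteq> {0..<0 + k} \<times> {..<p}"
        using False by (auto simp: div_less_iff_less_mult mult.commute)
      show "{0..<0 + k} \<times> {..<p} \<subseteq> (\<lambda>r. (r div p, r mod p)) ` {..<k * p}"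
      proof
        fix x assume x: "x \<in> {0..<0 + k} \<times> {..<p}"
        then obtain a i where ai: "x = (a, i)" "a < k" "i < p" by auto
        have "a * p + i < k * p"
        proof -
          have "a * p + i < (a + 1) * p" using ai by simp
          also have "\<dots> \<le> k * p" using ai by (intro mult_right_mono) auto
          finally show ?thesis .
        qed
        moreover have "x = ((a * p + i) div p, (a * p + i) mod p)" using ai by simp
        ultimately show "x \<in> (\<lambda>r. (r div p, r mod p)) ` {..<k * p}" by blast
      qed
    qed
  qed
  finally show ?thesis unfolding Gr_def .
qed

lemma rank_eq: "vec_space.rank (k * p) (block_mat \<sigma> E t p q k) = fv.dim (Gr \<sigma> E t p q 0 k)"
proof -
  have "block_mat \<sigma> E t p q k \<in> carrier_mat (k * p) ((k + t - 1) * q)"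
    by (simp add: block_mat_def)
  then show ?thesis using rank_rows rows_block by metis
qed


lemma Gr0: "Gr \<sigma> E t p q s 0 = {}" by (simp add: Gr_def)

lemma rr_mono: "fv.dim (Gr \<sigma> E t p q 0 n) \<le> fv.dim (Gr \<sigma> E t p q 0 (Suc n))"
  using Gr_split[of 0 n 1] fin_Gr dim_subset' by (metis Suc_eq_plus1 sup_ge1)

lemma rr_le: "fv.dim (Gr \<sigma> E t p q 0 (m + n)) \<le> fv.dim (Gr \<sigma> E t p q 0 m) + n * p"
proof -
  have "fv.dim (Gr \<sigma> E t p q 0 (m + n)) \<le> fv.dim (Gr \<sigma> E t p q 0 m) + card (Gr \<sigma> E t p q m n)"
    using Gr_split[of 0 m n] dim_Un_le[OF fin_Gr fin_Gr] by simp
  then show ?thesis using card_Gr[of m n] by simp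
qed

lemma rr_conc: "fv.dim (Gr \<sigma> E t p q 0 (Suc (Suc n))) + fv.dim (Gr \<sigma> E t p q 0 n)
   \<le> 2 * fv.dim (Gr \<sigma> E t p q 0 (Suc n))"
proof -
  let ?A = "Gr \<sigma> E t p q 0 (n + 1)" and ?B = "Gr \<sigma> E t p q (n + 1) 1" and ?C = "Gr \<sigma> E t p q 1 n"
  have CA: "?C \<subseteq> ?A" using Gr_split[of 0 1 n] by (simp add: add.commute)
  have AB: "?A \<union> ?B = Gr \<sigma> E t p q 0 (Suc (Suc n))" using Gr_split[of 0 "n+1" 1] by simp
  have CB: "?C \<union> ?B = Gr \<sigma> E t p q 1 (Suc n)" using Gr_split[of 1 n 1] by (simp add: add.commute)
  have "fv.dim (?A \<union> ?B) + fv.dim ?C \<le> fv.dim (?C \<union> ?B) + fv.dim ?A"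
    by (rule SUB[OF fin_Gr fin_Gr CA])
  then show ?thesis unfolding AB CB using dim_Gr[of 1 n] dim_Gr[of 1 "Suc n"] by simp
qed

lemma rr_super: "fv.dim (Gr \<sigma> E t p q 0 j) + fv.dim (Gr \<sigma> E t p q 0 k)
   \<le> fv.dim (Gr \<sigma> E t p q 0 (j + k)) + (t - 1) * min p q"
proof -
  define X where "X = Gr \<sigma> E t p q 0 j"
  define Y where "Y = Gr \<sigma> E t p q j k"
  define \<pi> where "\<pi> h = (\<lambda>c. if c < (j + t - 1) * q then 0 else h c)" for h :: "nat \<Rightarrow> 'a"
  have XY: "X \<union> Y = Gr \<sigma> E t p q 0 (j + k)" unfolding X_def Y_def using Gr_split[of 0 j k] by simp
  have dY: "fv.dim Y = fv.dim (Gr \<sigma> E t p q 0 k)" unfolding Y_def by (rule dim_Gr)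
  have fY: "finite Y" "finite (\<pi> ` Y)" unfolding Y_def using fin_Gr by auto
  have kill: "\<pi> x = 0" if "x \<in> X" for x
  proof -
    obtain a i where ai: "a < j" "x = grow \<sigma> E t q a i" using \<open>x \<in> X\<close> unfolding X_def Gr_def by auto
    have le: "(a + t) * q \<le> (j + t - 1) * q" using ai(1) t_pos by (intro mult_right_mono) auto
    show ?thesis unfolding \<pi>_def fun_eq_iff
    proof (intro allI)
      fix c show "(if c < (j + t - 1) * q then 0 else x c) = 0 c"
      proof (cases "c < (j + t - 1) * q")
        case False then have "\<not> c < (a + t) * q" using le by linarith
        then show ?thesis using False ai(2) by (simp add: grow_def)
      qed simp
    qed
  qed
  have main: "fv.dim X + fv.dim (\<pi> ` Y) \<le> fv.dim (X \<union> Y)"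
  proof (rule DPI[OF _ fY(1)])
    show "finite X" unfolding X_def by (rule fin_Gr)
    show "\<pi> (x + y) = \<pi> x + \<pi> y" for x y by (simp add: \<pi>_def fun_eq_iff)
    show "\<pi> (\<lambda>i. c * x i) = (\<lambda>i. c * \<pi> x i)" for c x by (simp add: \<pi>_def fun_eq_iff)
    show "\<pi> x = 0" if "x \<in> X" for x using kill that .
  qed
  have Ylow: "y c = 0" if "y \<in> Y" "c < j * q" for y c
  proof -
    obtain a i where ai: "j \<le> a" "y = grow \<sigma> E t q a i" using \<open>y \<in> Y\<close> unfolding Y_def Gr_def by auto
    have "j * q \<le> a * q" using ai(1) by (rule mult_right_mono) simp
    then have "\<not> a * q \<le> c" using that by linarith
    then show ?thesis using ai by (simp add: grow_def)
  qed
  have bound: "fv.dim (Gr \<sigma> E t p q 0 k) \<le> fv.dim (\<pi> ` Y) + (t - 1) * min p q"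
  proof (cases "p \<le> q")
    case True
    show ?thesis
    proof (cases "t - 1 \<le> k")
      case True
      define k' where "k' = k - (t - 1)"
      have kk: "k = k' + (t - 1)" using True unfolding k'_def by simp
      define Y' where "Y' = Gr \<sigma> E t p q (j + (t - 1)) k'"
      have Y'Y: "Y' \<subseteq> Y" unfolding Y'_def Y_def using Gr_split[of j "t - 1" k'] kk by (simp add: add.commute)
      have fix': "\<pi> y = y" if "y \<in> Y'" for y
      proof -
        obtain a i where ai: "j + (t - 1) \<le> a" "y = grow \<sigma> E t q a i" using \<open>y \<in> Y'\<close> unfolding Y'_def Gr_def by auto
        have le: "(j + t - 1) * q \<le> a * q" using ai(1) t_pos by (intro mult_right_mono) auto
        show ?thesis unfolding \<pi>_def fun_eq_iff
        proof (intro allI)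
          fix c show "(if c < (j + t - 1) * q then 0 else y c) = y c"
          proof (cases "c < (j + t - 1) * q")
            case True then have "\<not> a * q \<le> c" using le by linarith
            then show ?thesis using True ai(2) by (simp add: grow_def)
          qed simp
        qed
      qed
      have "Y' = \<pi> ` Y'" using fix' by (auto simp: image_iff)
      then have "Y' \<subseteq> \<pi> ` Y" using Y'Y by blast
      then have "fv.dim Y' \<le> fv.dim (\<pi> ` Y)" using dim_subset'[OF fY(2)] by blast
      moreover have "fv.dim Y' = fv.dim (Gr \<sigma> E t p q 0 k')" unfolding Y'_def by (rule dim_Gr)
      moreover have "fv.dim (Gr \<sigma> E t p q 0 k) \<le> fv.dim (Gr \<sigma> E t p q 0 k') + (t - 1) * p"
        using rr_le[of k' "t - 1"] kk by simp
      ultimately show ?thesis using \<open>p \<le> q\<close> by simp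
    next
      case False
      have "fv.dim (Gr \<sigma> E t p q 0 k) \<le> fv.dim (Gr \<sigma> E t p q 0 0) + k * p" using rr_le[of 0 k] by simp
      also have "\<dots> = k * p" by (simp add: Gr0)
      also have "\<dots> \<le> (t - 1) * p" using False by simp
      finally show ?thesis using \<open>p \<le> q\<close> by simp
    qed
  next
    case False
    define C where "C = {j * q..<(j + t - 1) * q}"
    define U where "U = (\<lambda>c. (\<lambda>x. if x = c then (1::'a) else 0)) ` C"
    have fU: "finite U" unfolding U_def C_def by simp
    have cU: "card U \<le> (t - 1) * q"
    proof -
      have "card U \<le> card C" unfolding U_def by (rule card_image_le) (simp add: C_def)
      also have "card C = (t - 1) * q"
      proof -
        have "j + t - 1 = j + (t - 1)" using t_pos by simp
        then have "(j + t - 1) * q = j * q + (t - 1) * q" by (simp add: add_mult_distrib)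
        then show ?thesis unfolding C_def by simp
      qed
      finally show ?thesis .
    qed
    have "Y \<subseteq> fv.span (\<pi> ` Y \<union> U)"
    proof
      fix y assume y: "y \<in> Y"
      have dec: "y = \<pi> y + (\<Sum>c\<in>C. (\<lambda>x. y c * (if x = c then 1 else 0)))"
      proof
        fix x
        have "(\<Sum>c\<in>C. (\<lambda>x. y c * (if x = c then 1 else 0))) x = (\<Sum>c\<in>C. if x = c then y c else 0)"
          unfolding sum_app by (intro sum.cong) auto
        also have "\<dots> = (if x \<in> C then y x else 0)"
          using sum.delta'[of C x y] by (simp add: C_def)
        finally have e: "(\<Sum>c\<in>C. (\<lambda>x. y c * (if x = c then 1 else 0))) x = (if x \<in> C then y x else 0)" .
        show "y x = (\<pi> y + (\<Sum>c\<in>C. (\<lambda>x. y c * (if x = c then 1 else 0)))) x"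
          unfolding plus_fun_apply e
        proof (cases "x < (j + t - 1) * q")
          case xlt: True
          show "y x = \<pi> y x + (if x \<in> C then y x else 0)"
          proof (cases "x \<in> C")
            case False
            then have "x < j * q" using xlt unfolding C_def by simp
            then show ?thesis using Ylow[OF y] xlt False by (simp add: \<pi>_def)
          qed (use xlt in \<open>simp add: \<pi>_def\<close>)
        next
          case False
          then have "x \<notin> C" unfolding C_def by simp
          then show "y x = \<pi> y x + (if x \<in> C then y x else 0)" using False by (simp add: \<pi>_def)
        qed
      qed
      have "\<pi> y \<in> fv.span (\<pi> ` Y \<union> U)" using y by (intro fv.span_base) blast
      moreover have "(\<Sum>c\<in>C. (\<lambda>x. y c * (if x = c then 1 else 0))) \<in> fv.span (\<pi> ` Y \<union> U)"
        by (intro fv.span_sum fv.span_scale fv.span_base) (auto simp: U_def)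
      ultimately have "\<pi> y + (\<Sum>c\<in>C. (\<lambda>x. y c * (if x = c then 1 else 0))) \<in> fv.span (\<pi> ` Y \<union> U)"
        by (rule fv.span_add)
      then show "y \<in> fv.span (\<pi> ` Y \<union> U)" by (simp only: dec[symmetric])
    qed
    then have "fv.dim Y \<le> fv.dim (\<pi> ` Y \<union> U)" using dim_mono' fY(2) fU by blast
    also have "\<dots> \<le> fv.dim (\<pi> ` Y) + card U" using dim_Un_le[OF fY(2) fU] .
    finally show ?thesis using cU dY False by simp
  qed
  show ?thesis using main bound XY unfolding X_def by simp
qed

end


lemma seq_lemma:
  fixes r :: "nat \<Rightarrow> nat"
  assumes mono: "\<And>n. r n \<le> r (Suc n)"
    and conc: "\<And>n. r (Suc (Suc n)) + r n \<le> 2 * r (Suc n)"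
    and super: "\<And>j k. r j + r k \<le> r (j + k) + C"
    and r0: "r 0 = 0" and BC: "C \<le> B"
  shows "\<exists>(d::nat) (s::int). \<forall>k \<ge> B. int (r k) = int d * int k + s"
proof -
  define \<delta> where "\<delta> n = r (Suc n) - r n" for n
  have rS: "r (Suc n) = r n + \<delta> n" for n using mono[of n] by (simp add: \<delta>_def)
  have dec: "\<delta> (Suc n) \<le> \<delta> n" for n using conc[of n] rS[of n] rS[of "Suc n"] by simp
  have decle: "\<delta> n \<le> \<delta> m" if "m \<le> n" for m n
    using that by (induction n rule: dec_induct) (auto intro: order.trans[OF dec])
  define d where "d = (LEAST v. \<exists>n. \<delta> n = v)"
  obtain N where N: "\<delta> N = d" using LeastI_ex[of "\<lambda>v. \<exists>n. \<delta> n = v"] unfolding d_def by blast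
  have dle: "d \<le> \<delta> n" for n unfolding d_def by (rule Least_le) blast
  have hN: "\<delta> n = d" if "N \<le> n" for n using decle[OF that] N dle[of n] by simp
  have linN: "r n = r N + d * (n - N)" if "N \<le> n" for n
    using that
  proof (induction n rule: dec_induct)
    case (step n)
    then show ?case using rS[of n] hN[of n] by (simp add: Suc_diff_le)
  qed simp
  have bound: "r k \<le> d * k + C" for k
  proof -
    have "r N + r k \<le> r (N + k) + C" by (rule super)
    also have "r (N + k) = r N + d * k" using linN[of "N + k"] by simp
    finally show ?thesis by simp
  qed
  have stab: "\<delta> n = d" if "C \<le> n" for n
  proof (rule ccontr)
    assume "\<delta> n \<noteq> d"
    then have big: "Suc d \<le> \<delta> n" using dle[of n] by simp
    have low: "m * Suc d \<le> r m" if "m \<le> Suc n" for m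
      using that
    proof (induction m)
      case 0 then show ?case by simp
    next
      case (Suc m)
      then have "Suc d \<le> \<delta> m" using big decle[of m n] by simp
      then show ?case using Suc rS[of m] by simp
    qed
    have "Suc n * Suc d \<le> d * Suc n + C" using order.trans[OF low[of "Suc n"] bound[of "Suc n"]] by simp
    moreover have "Suc n * Suc d = d * Suc n + Suc n" by simp
    ultimately have "Suc n \<le> C" by linarith
    then show False using that by simp
  qed
  have linB: "r k = r B + d * (k - B)" if "B \<le> k" for k
    using that
  proof (induction k rule: dec_induct)
    case (step k)
    then have "\<delta> k = d" using stab BC by simp
    then show ?case using step rS[of k] by (simp add: Suc_diff_le)
  qed simp
  show ?thesis
  proof (intro exI allI impI)
    fix k assume k: "B \<le> k"
    have "int (r k) = int (r B) + int d * int (k - B)" using linB[OF k] by simp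
    also have "\<dots> = int d * int k + (int (r B) - int d * int B)" using k by (simp add: of_nat_diff algebra_simps)
    finally show "int (r k) = int d * int k + (int (r B) - int d * int B)" .
  qed
qed

theorem mainTheorem2:
  fixes \<sigma> :: "'a::field \<Rightarrow> 'a"
    and E :: "nat \<Rightarrow> 'a mat"
    and t p q :: nat
  assumes hom_one: "\<sigma> 1 = 1"
    and hom_add: "\<And>x y. \<sigma> (x + y) = \<sigma> x + \<sigma> y"
    and hom_mult: "\<And>x y. \<sigma> (x * y) = \<sigma> x * \<sigma> y"
    and t_pos: "t \<ge> 1"
    and E_dim: "\<And>i. i \<in> {1..t} \<Longrightarrow> E i \<in> carrier_mat p q"
  shows "\<exists>(d'::nat) (s'::int). \<forall>k::nat. k \<ge> 1 \<and> k \<ge> (t - 1) * (min p q + 1) \<longrightarrow>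
           int (vec_space.rank (k * p) (block_mat \<sigma> E t p q k)) = int d' * int k + s'"
proof -
  note A = hom_one hom_add hom_mult t_pos E_dim
  define r where "r n = fv.dim (Gr \<sigma> E t p q 0 n)" for n
  have "\<exists>(d::nat) (s::int). \<forall>k \<ge> (t - 1) * (min p q + 1). int (r k) = int d * int k + s"
  proof (rule seq_lemma)
    show "r n \<le> r (Suc n)" for n unfolding r_def by (rule rr_mono[OF A])
    show "r (Suc (Suc n)) + r n \<le> 2 * r (Suc n)" for n unfolding r_def by (rule rr_conc[OF A])
    show "r j + r k \<le> r (j + k) + (t - 1) * min p q" for j k unfolding r_def by (rule rr_super[OF A])
    show "r 0 = 0" unfolding r_def by (simp add: Gr_def)
    show "(t - 1) * min p q \<le> (t - 1) * (min p q + 1)" by simp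
  qed
  then obtain d s where ds: "\<forall>k \<ge> (t - 1) * (min p q + 1). int (r k) = int d * int k + s" by blast
  have "vec_space.rank (k * p) (block_mat \<sigma> E t p q k) = r k" for k
    unfolding r_def by (rule rank_eq[OF A])
  then show ?thesis using ds by auto
qed

end
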